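(* Fix constants $\lambda_1,\ldots,\lambda_K\ge 0$ and $\mu_1,\ldots,\mu_M\ge 0$, and for a channel realization $\boldsymbol{\alpha}$ consider the problem $$\max_{p_1,\ldots,p_K\ge 0}\ \log\Big(1+\sum_{k=1}^K h_kp_k\Big)-\sum_{k=1}^K\lambda_kp_k-\sum_{m=1}^M\mu_m\sum_{k=1}^K g_{km}p_k .$$ For almost every realization $\boldsymbol{\alpha}$ the following holds: if $(p_1^*,\ldots,p_K^* )$ is an optimal solution with $p_i^*>0$ for some user $i$ and $p_j^*=0$ for every $j\neq i$, then $$\frac{h_i}{\lambda_i+\sum_{m=1}^M\mu_m g_{im}}\ \ge\ \frac{h_j}{\lambda_j+\sum_{m=1}^M\mu_m g_{jm}}\quad\forall j\neq i,$$ and $$p_i^*=\Big(\frac{1}{\lambda_i+\sum_{m=1}^M\mu_m g_{im}}-\frac{1}{h_i}\Big)^+ .$$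
   Context: $\boldsymbol{\alpha}=(h_1,\ldots,h_K,g_{11},\ldots,g_{KM})$ is a random vector of nonnegative channel power gains ($h_k$: secondary user $k$ to secondary base station; $g_{km}$: secondary user $k$ to primary receiver $m$) with a continuous, differentiable joint cumulative distribution function, the $h_k$'s and $g_{km}$'s being independent. $(x)^+=\max(0,x)$. *)

theory Defs
  imports "HOL-Probability.Probability"
begin

text \<open>A channel realization alpha = (h, g): h $ k is the gain user k -> base station,
  g $ k $ m the gain user k -> primary receiver m. Users are indexed by the finite
  type 'k (K = CARD('k)), primary receivers by the finite type 'm (M = CARD('m)).\<close>

type_synonym ('k, 'm) chan = "(real^'k) \<times> (real^'m^'k)"

definition chan_cdf :: "('k::finite, 'm::finite) chan measure \<Rightarrow> ('k, 'm) chan \<Rightarrow> real" where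
  "chan_cdf P x = measure P {a \<in> space P. (\<forall>k. fst a $ k \<le> fst x $ k) \<and> (\<forall>k m. snd a $ k $ m \<le> snd x $ k $ m)}"

definition chan_comp :: "'k + ('k \<times> 'm) \<Rightarrow> ('k::finite, 'm::finite) chan \<Rightarrow> real" where
  "chan_comp i a = (case i of Inl k \<Rightarrow> fst a $ k | Inr (k, m) \<Rightarrow> snd a $ k $ m)"

definition wcost :: "('k::finite \<Rightarrow> real) \<Rightarrow> ('m::finite \<Rightarrow> real) \<Rightarrow> ('k, 'm) chan \<Rightarrow> 'k \<Rightarrow> real" where
  "wcost lam mu a k = lam k + (\<Sum>m\<in>UNIV. mu m * snd a $ k $ m)"

definition obj :: "('k::finite \<Rightarrow> real) \<Rightarrow> ('m::finite \<Rightarrow> real) \<Rightarrow> ('k, 'm) chan \<Rightarrow> ('k \<Rightarrow> real) \<Rightarrow> real" where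
  "obj lam mu a p = ln (1 + (\<Sum>k\<in>UNIV. fst a $ k * p k)) - (\<Sum>k\<in>UNIV. lam k * p k)
      - (\<Sum>m\<in>UNIV. mu m * (\<Sum>k\<in>UNIV. snd a $ k $ m * p k))"

definition is_optimal :: "('k::finite \<Rightarrow> real) \<Rightarrow> ('m::finite \<Rightarrow> real) \<Rightarrow> ('k, 'm) chan \<Rightarrow> ('k \<Rightarrow> real) \<Rightarrow> bool" where
  "is_optimal lam mu a p \<longleftrightarrow> (\<forall>k. 0 \<le> p k) \<and>
     (\<forall>q. (\<forall>k. 0 \<le> q k) \<longrightarrow> obj lam mu a q \<le> obj lam mu a p)"

end

theory Submission imports Defs begin
lemma obj_alt: "obj lam mu a p = ln (1 + (\<Sum>k\<in>UNIV. fst a $ k * p k)) - (\<Sum>k\<in>UNIV. wcost lam mu a k * p k)"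
proof -
  have "(\<Sum>m\<in>UNIV. mu m * (\<Sum>k\<in>UNIV. snd a $ k $ m * p k)) = (\<Sum>m\<in>UNIV. \<Sum>k\<in>UNIV. mu m * snd a $ k $ m * p k)"
    by (simp add: sum_distrib_left mult.assoc)
  also have "\<dots> = (\<Sum>k\<in>UNIV. \<Sum>m\<in>UNIV. mu m * snd a $ k $ m * p k)"
    by (rule sum.swap)
  also have "\<dots> = (\<Sum>k\<in>UNIV. (\<Sum>m\<in>UNIV. mu m * snd a $ k $ m) * p k)"
    by (simp add: sum_distrib_right)
  finally have e: "(\<Sum>m\<in>UNIV. mu m * (\<Sum>k\<in>UNIV. snd a $ k $ m * p k)) = (\<Sum>k\<in>UNIV. (\<Sum>m\<in>UNIV. mu m * snd a $ k $ m) * p k)" .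
  have "(\<Sum>k\<in>UNIV. wcost lam mu a k * p k) = (\<Sum>k\<in>UNIV. lam k * p k) + (\<Sum>k\<in>UNIV. (\<Sum>m\<in>UNIV. mu m * snd a $ k $ m) * p k)"
    unfolding wcost_def by (simp add: distrib_right sum.distrib)
  then show ?thesis unfolding obj_def e by simp
qed

lemma sum_single:
  assumes "\<forall>k. k \<noteq> i \<longrightarrow> p k = 0"
  shows "(\<Sum>k\<in>(UNIV::'k::finite set). f k * p k) = f i * (p i::real)"
proof -
  have "(\<Sum>k\<in>(UNIV::'k set). f k * p k) = (\<Sum>k\<in>UNIV. if k = i then f i * p i else 0)"
    by (rule sum.cong) (use assms in auto)
  then show ?thesis by simp
qed

lemma sum_upd:
  assumes "p j = 0"
  shows "(\<Sum>k\<in>(UNIV::'k::finite set). f k * (p(j:=t)) k) = (\<Sum>k\<in>UNIV. f k * p k) + f j * (t::real)"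
proof -
  have "(\<Sum>k\<in>(UNIV::'k set). f k * (p(j:=t)) k) = (\<Sum>k\<in>UNIV. f k * p k + (if k = j then f j * t else 0))"
    by (rule sum.cong) (use assms in auto)
  then show ?thesis by (simp add: sum.distrib)
qed

lemma det:
  fixes a :: "('k::finite,'m::finite) chan"
  assumes hpos: "\<forall>k. 0 < fst a $ k" and wnn: "\<forall>k. 0 \<le> wcost lam mu a k"
    and opt: "is_optimal lam mu a p" and pi: "0 < p i" and z: "\<forall>j. j \<noteq> i \<longrightarrow> p j = 0"
  shows "(\<forall>j. j \<noteq> i \<longrightarrow> fst a $ j / wcost lam mu a j \<le> fst a $ i / wcost lam mu a i) \<and>
           p i = max 0 (1 / wcost lam mu a i - 1 / fst a $ i)"
proof -
  define h where "h = fst a $ i"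
  define w where "w = wcost lam mu a i"
  have h0: "h > 0" using hpos h_def by auto
  have pnn: "\<forall>k. 0 \<le> p k" using opt unfolding is_optimal_def by auto
  have optq: "\<And>q. \<forall>k. 0 \<le> q k \<Longrightarrow> obj lam mu a q \<le> obj lam mu a p"
    using opt unfolding is_optimal_def by auto
  define G where "G t = ln (1 + h * t) - w * t" for t
  have Gq: "obj lam mu a (p(i:=t)) = G t" for t
  proof -
    have "\<forall>k. k \<noteq> i \<longrightarrow> (p(i:=t)) k = 0" using z by auto
    then show ?thesis unfolding obj_alt G_def h_def w_def
      by (simp add: sum_single[where i=i])
  qed
  have Gp: "obj lam mu a p = G (p i)" using Gq[of "p i"] by simp
  have D: "1 + h * p i > 0" using h0 pi by (simp add: add_pos_pos)
  have "DERIV G (p i) :> h / (1 + h * p i) - w"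
    unfolding G_def using D
    by (auto intro!: derivative_eq_intros)
  moreover have "\<forall>y. \<bar>p i - y\<bar> < p i \<longrightarrow> G y \<le> G (p i)"
  proof (intro allI impI)
    fix y assume "\<bar>p i - y\<bar> < p i"
    then have "y \<ge> 0" by auto
    then have "\<forall>k. 0 \<le> (p(i:=y)) k" using pnn by auto
    then show "G y \<le> G (p i)" using optq Gq Gp by metis
  qed
  ultimately have d0: "h / (1 + h * p i) - w = 0" using DERIV_local_max pi by blast
  have hw: "h = w * (1 + h * p i)" using d0 D by (simp add: field_simps)
  have w0: "w > 0" using hw h0 D by (metis mult_pos_pos zero_less_mult_pos2)
  have pform: "p i = 1 / w - 1 / h" using hw h0 w0 by (simp add: field_simps)
  have part2: "p i = max 0 (1 / wcost lam mu a i - 1 / fst a $ i)"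
    using pform pi unfolding w_def h_def by simp
  have part1: "fst a $ j / wcost lam mu a j \<le> fst a $ i / wcost lam mu a i" if ji: "j \<noteq> i" for j
  proof -
    define hj where "hj = fst a $ j"
    define wj where "wj = wcost lam mu a j"
    define H where "H t = ln (1 + h * p i + hj * t) - w * p i - wj * t" for t
    have pj: "p j = 0" using z ji by auto
    have Hq: "obj lam mu a (p(j:=t)) = H t" for t
    proof -
      have "(\<Sum>k\<in>UNIV. fst a $ k * p k) = h * p i" using sum_single[OF z] h_def by simp
      moreover have "(\<Sum>k\<in>UNIV. wcost lam mu a k * p k) = w * p i" using sum_single[OF z] w_def by simp
      ultimately show ?thesis unfolding obj_alt H_def
        unfolding sum_upd[where p=p and j=j and f="\<lambda>k. fst a $ k", OF pj]
          sum_upd[where p=p and j=j and f="wcost lam mu a", OF pj]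
        by (simp add: hj_def wj_def add.assoc)
    qed
    have H0: "obj lam mu a p = H 0" using Hq[of 0] pj by (metis fun_upd_triv)
    have le: "hj / (1 + h * p i) - wj \<le> 0"
    proof (rule ccontr)
      assume "\<not> ?thesis"
      then have pos: "0 < hj / (1 + h * p i) - wj" by simp
      have "DERIV H 0 :> hj / (1 + h * p i + hj * 0) - wj"
        unfolding H_def using D
        by (auto intro!: derivative_eq_intros)
      then have "DERIV H 0 :> hj / (1 + h * p i) - wj" by simp
      from DERIV_pos_inc_right[OF this pos] obtain d where d: "d > 0" "\<forall>t>0. t < d \<longrightarrow> H 0 < H (0 + t)" by blast
      have "H 0 < H (d/2)" using d by auto
      moreover have "\<forall>k. 0 \<le> (p(j:=d/2)) k" using pnn d by auto
      then have "H (d/2) \<le> H 0" using optq Hq H0 by metis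
      ultimately show False by simp
    qed
    then have "hj \<le> wj * (1 + h * p i)" using D by (simp add: field_simps)
    then have "hj * w \<le> wj * (1 + h * p i) * w" using w0 by (intro mult_right_mono) auto
    also have "\<dots> = wj * h" by (subst (2) hw) (simp add: algebra_simps)
    finally have "hj * w \<le> wj * h" .
    show ?thesis
    proof (cases "wj = 0")
      case True then show ?thesis using h0 w0 unfolding hj_def wj_def h_def w_def by simp
    next
      case False
      then have "wj > 0" using wnn wj_def by (metis order_le_less)
      then show ?thesis using \<open>hj * w \<le> wj * h\<close> w0
        unfolding hj_def[symmetric] wj_def[symmetric] h_def[symmetric] w_def[symmetric]
        by (simp add: divide_le_eq le_divide_eq mult.commute)
    qed
  qed
  show ?thesis using part1 part2 by blast
qed
definition box :: "('k::finite \<Rightarrow> real) \<Rightarrow> ('k \<Rightarrow> 'm::finite \<Rightarrow> real) \<Rightarrow> ('k,'m) chan set" where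
  "box c d = {a. (\<forall>k. fst a $ k \<le> c k) \<and> (\<forall>k m. snd a $ k $ m \<le> d k m)}"

lemma box_borel: "box c d \<in> sets borel"
  unfolding box_def
  by (intro borel_closed closed_Collect_all closed_Collect_conj closed_Collect_le continuous_intros)

lemma hpos_ae:
  fixes P :: "('k::finite, 'm::finite) chan measure"
  assumes "prob_space P"
    and sP: "sets P = sets borel"
    and nn: "AE a in P. (\<forall>k. 0 \<le> fst a $ k) \<and> (\<forall>k m. 0 \<le> snd a $ k $ m)"
    and cont: "continuous_on UNIV (chan_cdf P)"
  shows "AE a in P. 0 < fst a $ k"
proof -
  interpret prob_space P by fact
  have sp: "space P = UNIV" using sets_eq_imp_space_eq[OF sP] by simp
  have meas: "box c d \<in> sets P" for c d using box_borel sP by simp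
  have cdf: "chan_cdf P x = measure P (box (\<lambda>k. fst x $ k) (\<lambda>k m. snd x $ k $ m))" for x
    unfolding chan_cdf_def box_def sp by simp
  define z where "z n t = (((\<chi> j. if j = k then t else real n), (\<chi> j m. real n))
      :: ('k,'m) chan)" for n :: nat and t :: real
  define N where "N n = (box (\<lambda>j. if j = k then 0 else real n) (\<lambda>j m. real n) :: ('k,'m) chan set)" for n :: nat
  have N0: "emeasure P (N n) = 0" for n
  proof -
    define f where "f t = chan_cdf P (z n t)" for t
    have ci: "continuous_on UNIV (\<lambda>x::real. if j = k then x else real n)" for j
      by (cases "j = k") (auto intro: continuous_intros)
    have fc: "continuous_on UNIV f" unfolding f_def z_def
      by (rule continuous_on_compose2[OF cont]) (auto intro!: continuous_intros ci)
    have neg: "f t = 0" if "t < 0" for t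
    proof -
      have fe: "f t = measure P (box (\<lambda>j. if j = k then t else real n) (\<lambda>j (m::'m). real n))"
        unfolding f_def chan_cdf_def z_def box_def sp by simp
      have "AE a in P. a \<notin> box (\<lambda>j. if j = k then t else real n) (\<lambda>j (m::'m). real n)"
      proof (rule AE_mp[OF nn], intro AE_I2 impI)
        fix a :: "('k,'m) chan" assume "(\<forall>k. 0 \<le> fst a $ k) \<and> (\<forall>k m. 0 \<le> snd a $ k $ m)"
        then have "0 \<le> fst a $ k" by blast
        then show "a \<notin> box (\<lambda>j. if j = k then t else real n) (\<lambda>j (m::'m). real n)"
          using that unfolding box_def by (auto dest: spec[of _ k])
      qed
      then have "emeasure P (box (\<lambda>j. if j = k then t else real n) (\<lambda>j (m::'m). real n)) = 0"
        by (subst (asm) AE_iff_measurable[OF meas]) (auto simp: sp)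
      then show ?thesis using fe by (simp add: measure_def)
    qed
    have cl: "closed {t \<in> UNIV. f t = 0}" by (rule continuous_closed_preimage_constant[OF fc]) simp
    have "{..<0} \<subseteq> {t \<in> UNIV. f t = 0}" using neg by auto
    then have "closure {..<(0::real)} \<subseteq> {t \<in> UNIV. f t = 0}" using cl by (rule closure_minimal)
    then have "f 0 = 0" by auto
    then have "measure P (N n) = 0" unfolding f_def chan_cdf_def z_def N_def box_def sp by simp
    then show ?thesis by (simp add: emeasure_eq_measure)
  qed
  have U: "{a. fst a $ k \<le> 0} = (\<Union>n. N n)"
  proof safe
    fix a :: "('k,'m) chan" assume a: "fst a $ k \<le> 0"
    obtain n :: nat where n: "norm a \<le> real n" using real_arch_simple by blast
    have "fst a $ j \<le> real n" for j
      using component_le_norm_cart[of "fst a" j] norm_fst_le[of "fst a" "snd a"] n by auto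
    moreover have "snd a $ j $ m \<le> real n" for j m
      using component_le_norm_cart[of "snd a $ j" m] Finite_Cartesian_Product.norm_nth_le[where x="snd a" and i=j]
        norm_snd_le[of "snd a" "fst a"] n by auto
    ultimately have "a \<in> N n" using a unfolding N_def box_def by auto
    then show "a \<in> (\<Union>n. N n)" by blast
  next
    fix a n assume "a \<in> N n" then show "fst a $ k \<le> 0" unfolding N_def box_def by (auto dest: spec[of _ k])
  qed
  have "emeasure P (\<Union>n. N n) = 0"
    by (rule emeasure_UN_eq_0) (use N0 meas N_def in auto)
  then have "emeasure P {a. fst a $ k \<le> 0} = 0" using U by simp
  moreover have "{a::('k,'m) chan. fst a $ k \<le> 0} \<in> sets P" unfolding sP
    by (intro borel_closed closed_Collect_le continuous_intros)
  ultimately show ?thesis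
    by (subst AE_iff_measurable[of "{a. fst a $ k \<le> 0}"]) (auto simp: sp)
qed
theorem lemma3p2:
  fixes P :: "('k::finite, 'm::finite) chan measure"
    and lam :: "'k \<Rightarrow> real" and mu :: "'m \<Rightarrow> real"
  assumes "prob_space P"
    and "sets P = sets borel"
    and "AE a in P. (\<forall>k. 0 \<le> fst a $ k) \<and> (\<forall>k m. 0 \<le> snd a $ k $ m)"
    and "continuous_on UNIV (chan_cdf P)"
    and "chan_cdf P differentiable_on UNIV"
    and "prob_space.indep_vars P (\<lambda>_. borel) chan_comp UNIV"
    and "\<forall>k. 0 \<le> lam k"
    and "\<forall>m. 0 \<le> mu m"
  shows "AE a in P. \<forall>p i. is_optimal lam mu a p \<and> 0 < p i \<and> (\<forall>j. j \<noteq> i \<longrightarrow> p j = 0) \<longrightarrow>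
           (\<forall>j. j \<noteq> i \<longrightarrow> fst a $ j / wcost lam mu a j \<le> fst a $ i / wcost lam mu a i) \<and>
           p i = max 0 (1 / wcost lam mu a i - 1 / fst a $ i)"
proof -
  have H: "AE a in P. \<forall>k\<in>UNIV. 0 < fst a $ k"
    by (rule AE_finite_allI, simp, rule hpos_ae[OF assms(1,2,3,4)])
  show ?thesis using H assms(3)
  proof eventually_elim
    case (elim a)
    have hp: "\<forall>k. 0 < fst a $ k" using elim(1) by blast
    have g: "\<forall>k m. 0 \<le> snd a $ k $ m" using elim(2) by blast
    have wn: "\<forall>k. 0 \<le> wcost lam mu a k"
    proof
      fix k
      have "0 \<le> (\<Sum>m\<in>UNIV. mu m * snd a $ k $ m)"
        by (rule sum_nonneg) (use g assms(8) in simp)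
      then show "0 \<le> wcost lam mu a k" unfolding wcost_def using assms(7) by (simp add: add_nonneg_nonneg)
    qed
    show ?case
    proof (intro allI impI)
      fix p i
      assume A: "is_optimal lam mu a p \<and> 0 < p i \<and> (\<forall>j. j \<noteq> i \<longrightarrow> p j = 0)"
      then have o: "is_optimal lam mu a p" and pi: "0 < p i" and z: "\<forall>j. j \<noteq> i \<longrightarrow> p j = 0"
        using A by auto
      show "(\<forall>j. j \<noteq> i \<longrightarrow> fst a $ j / wcost lam mu a j \<le> fst a $ i / wcost lam mu a i) \<and>
           p i = max 0 (1 / wcost lam mu a i - 1 / fst a $ i)"
        by (rule det[OF hp wn o pi z])
    qed
  qed
qed

end
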